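(* Let $k$ be a field, $e, h \geq 1$ integers, and $M$ a finite-dimensional $k[T]/T^e$-module generated by at most $h$ elements. For $1 \leq i \leq e$ let $\delta_i := \dim_k M[T^i]/M[T^{i-1}]$ (so $\delta_1 \geq \dots \geq \delta_e$). Then $\mathrm{Hdg}(M) = P(\delta_1, \dots, \delta_e)$.
   Context: $M[T^i]$ denotes the kernel of multiplication by $T^i$ on $M$. For integers $d_1,\dots,d_N \in [0,h]$, $P(d_1,\dots,d_N)$ is the function on $[0,h]$ given by $x \mapsto \frac{1}{N}\sum_{i=1}^N \max(0, x+d_i-h)$. Writing $M \simeq \bigoplus_{i=1}^h k[T]/T^{a_i}$ with integers $0 \leq a_i \leq e$, the Hodge polygon $\mathrm{Hdg}(M)$ is the convex polygon on $[0,h]$ starting at the origin whose slopes are $\frac{a_1}{e}, \dots, \frac{a_h}{e}$ (each on an interval of length $1$, arranged in increasing order). *)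

theory Defs
  imports Complex_Main
begin

text \<open>A module over k[T]/T^e is modelled as a k-vector space (the type 'm with scalar
multiplication scale) together with a k-linear endomorphism T with T^e = 0.\<close>

definition kerT :: "('m::zero \<Rightarrow> 'm) \<Rightarrow> nat \<Rightarrow> 'm set" where
  "kerT T i = {x. (T ^^ i) x = 0}"

text \<open>delta_i = dim_k M[T^i]/M[T^(i-1)] = dim M[T^i] - dim M[T^(i-1)] (finite dimension).\<close>
definition delta :: "('k::field \<Rightarrow> 'm::ab_group_add \<Rightarrow> 'm) \<Rightarrow> ('m \<Rightarrow> 'm) \<Rightarrow> nat \<Rightarrow> real" where
  "delta scale T i = real (vector_space.dim scale (kerT T i)) - real (vector_space.dim scale (kerT T (i - 1)))"

text \<open>M is isomorphic to the direct sum of k[T]/T^(a_i), i < h, via the generators v_i: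
  T^(a_i) v_i = 0, and the vectors T^j v_i (i < h, j < a_i) form a basis of M
  (as an indexed family: unique coefficients, and they span).\<close>
definition is_cyclic_decomposition ::
  "('k::field \<Rightarrow> 'm::ab_group_add \<Rightarrow> 'm) \<Rightarrow> ('m \<Rightarrow> 'm) \<Rightarrow> nat \<Rightarrow> nat list \<Rightarrow> (nat \<Rightarrow> 'm) \<Rightarrow> bool" where
  "is_cyclic_decomposition scale T h a v \<longleftrightarrow>
     length a = h \<and>
     (\<forall>i<h. (T ^^ (a ! i)) (v i) = 0) \<and>
     (\<forall>c :: nat \<Rightarrow> nat \<Rightarrow> 'k.
        (\<Sum>i<h. \<Sum>j<a ! i. scale (c i j) ((T ^^ j) (v i))) = 0 \<longrightarrow>
        (\<forall>i<h. \<forall>j<a ! i. c i j = 0)) \<and>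
     module.span scale {(T ^^ j) (v i) | i j. i < h \<and> j < a ! i} = UNIV"

text \<open>Hodge polygon of the slopes a_1/e, ..., a_h/e: the convex piecewise linear function on
  [0,h] starting at 0 whose slopes, sorted increasingly, are a_i/e on consecutive intervals of
  length 1.\<close>
definition hodge_polygon :: "nat \<Rightarrow> nat list \<Rightarrow> real \<Rightarrow> real" where
  "hodge_polygon e a x =
     (let b = sort a; n = nat \<lfloor>x\<rfloor> in
       (\<Sum>i<n. real (b ! i) / real e)
       + (x - real n) * (if n < length b then real (b ! n) / real e else 0))"

definition P_poly :: "nat \<Rightarrow> real list \<Rightarrow> real \<Rightarrow> real" where
  "P_poly h d x = (1 / real (length d)) * (\<Sum>i<length d. max 0 (x + d ! i - real h))"

end

theory Submission imports Defs "HOL-Library.Multiset" begin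
lemma sum_ind_ge: "(\<Sum>m<n. if k \<le> m then 1 else (0::real)) = real (n - k)"
  by (induction n) (auto simp: Suc_diff_le)

lemma sum_ind_lt: "(\<Sum>i<e. if i < y then 1 else (0::real)) = real (min e y)"
  by (induction e) auto

lemma thr:
  fixes b :: "nat list" and x :: real
  assumes srt: "sorted b" and len: "length b = h" and x0: "0 \<le> x" and xh: "x \<le> real h"
  defines "n \<equiv> nat \<lfloor>x\<rfloor>"
  shows "(\<Sum>m<n. if s \<le> b ! m then 1 else (0::real)) + (x - real n) * (if n < h then (if s \<le> b ! n then 1 else 0) else 0)
         = max 0 (x + (\<Sum>m<h. if s \<le> b ! m then 1 else (0::real)) - real h)"
proof -
  define k where "k = length (takeWhile (\<lambda>y. y < s) b)"
  have kh: "k \<le> h" unfolding k_def using len length_takeWhile_le by metis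
  have iff: "s \<le> b ! m \<longleftrightarrow> k \<le> m" if "m < h" for m
  proof
    assume "s \<le> b ! m"
    show "k \<le> m"
    proof (rule ccontr)
      assume "\<not> k \<le> m"
      then have "m < k" by simp
      then have "takeWhile (\<lambda>y. y < s) b ! m = b ! m" unfolding k_def by (rule takeWhile_nth)
      moreover have "takeWhile (\<lambda>y. y < s) b ! m \<in> set (takeWhile (\<lambda>y. y < s) b)"
        using \<open>m < k\<close> unfolding k_def by simp
      ultimately have "b ! m < s" by (metis set_takeWhileD)
      with \<open>s \<le> b ! m\<close> show False by simp
    qed
  next
    assume "k \<le> m"
    then have "k < length b" using that len by simp
    then have "\<not> b ! k < s" unfolding k_def by (rule nth_length_takeWhile)
    moreover have "b ! k \<le> b ! m" using sorted_nth_mono[OF srt \<open>k \<le> m\<close>] that len by simp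
    ultimately show "s \<le> b ! m" by simp
  qed
  have nh: "n \<le> h" unfolding n_def using xh by (simp add: nat_le_iff floor_le_iff le_nat_iff)
  have s1: "(\<Sum>m<n. if s \<le> b ! m then 1 else (0::real)) = real (n - k)"
    using iff nh by (simp add: sum_ind_ge[symmetric])
  have s2: "(\<Sum>m<h. if s \<le> b ! m then 1 else (0::real)) = real (h - k)"
    using iff by (simp add: sum_ind_ge[symmetric])
  have nx: "real n \<le> x" "x < real n + 1" unfolding n_def using x0 by linarith+
  show ?thesis
  proof (cases "n < h")
    case True
    then show ?thesis using iff s1 s2 nx kh by (cases "k \<le> n") (auto simp: of_nat_diff)
  next
    case False
    then have "n = h" using nh by simp
    then have "x = real h" using nx xh by linarith
    then show ?thesis using s1 s2 \<open>n = h\<close> kh by (simp add: of_nat_diff)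
  qed
qed

lemma sum_nth_sort:
  fixes g :: "nat \<Rightarrow> real"
  shows "(\<Sum>m<length a. g (sort a ! m)) = (\<Sum>j<length a. g (a ! j))"
proof -
  have "(\<Sum>m<length a. g (sort a ! m)) = sum_list (map g (sort a))"
    by (simp add: sum_list_sum_nth atLeast0LessThan)
  also have "\<dots> = sum_list (map g a)"
    by (metis mset_map mset_sort sum_mset_sum_list)
  also have "\<dots> = (\<Sum>j<length a. g (a ! j))"
    by (simp add: sum_list_sum_nth atLeast0LessThan)
  finally show ?thesis .
qed

lemma comb:
  fixes a :: "nat list" and x :: real
  assumes len: "length a = h" and ae: "\<forall>j<h. a ! j \<le> e" and e1: "e \<ge> 1"
    and x0: "0 \<le> x" and xh: "x \<le> real h"
  shows "hodge_polygon e a x = (1 / real e) * (\<Sum>i<e. max 0 (x + (\<Sum>j<h. if i + 1 \<le> a ! j then 1 else (0::real)) - real h))"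
proof -
  define b where "b = sort a"
  define n where "n = nat \<lfloor>x\<rfloor>"
  have lb: "length b = h" using len b_def by simp
  have sb: "sorted b" using b_def by simp
  have be: "b ! m \<le> e" if "m < h" for m
  proof -
    have "b ! m \<in> set a" using that lb b_def by (metis nth_mem set_sort)
    then show ?thesis using ae len by (metis in_set_conv_nth)
  qed
  have cnt: "(\<Sum>j<h. if i + 1 \<le> a ! j then 1 else (0::real)) = (\<Sum>m<h. if i + 1 \<le> b ! m then 1 else (0::real))" for i
    using sum_nth_sort[of "\<lambda>y. if i + 1 \<le> y then 1 else 0" a] len b_def by simp
  have bm: "real (b ! m) = (\<Sum>i<e. if i + 1 \<le> b ! m then 1 else (0::real))" if "m < h" for m
  proof -
    have "(\<Sum>i<e. if i + 1 \<le> b ! m then 1 else (0::real)) = (\<Sum>i<e. if i < b ! m then 1 else (0::real))"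
      by (rule sum.cong) auto
    also have "\<dots> = real (min e (b ! m))" by (rule sum_ind_lt)
    finally show ?thesis using be[OF that] by simp
  qed
  have nh: "n \<le> h" unfolding n_def using xh by (simp add: nat_le_iff floor_le_iff le_nat_iff)
  have "(\<Sum>i<e. max 0 (x + (\<Sum>j<h. if i + 1 \<le> a ! j then 1 else (0::real)) - real h))
     = (\<Sum>i<e. (\<Sum>m<n. if i + 1 \<le> b ! m then 1 else (0::real)) + (x - real n) * (if n < h then (if i + 1 \<le> b ! n then 1 else 0) else 0))"
    unfolding cnt n_def by (rule sum.cong[OF refl], rule thr[OF sb lb x0 xh, symmetric])
  also have "\<dots> = (\<Sum>m<n. \<Sum>i<e. if i + 1 \<le> b ! m then 1 else (0::real)) + (x - real n) * (if n < h then (\<Sum>i<e. if i + 1 \<le> b ! n then 1 else (0::real)) else 0)"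
    by (simp add: sum.distrib sum.swap[of _ "{..<e}"] sum_distrib_left)
  also have "\<dots> = (\<Sum>m<n. real (b ! m)) + (x - real n) * (if n < h then real (b ! n) else 0)"
    using bm nh by simp
  finally have eq: "(\<Sum>i<e. max 0 (x + (\<Sum>j<h. if i + 1 \<le> a ! j then 1 else (0::real)) - real h)) = (\<Sum>m<n. real (b ! m)) + (x - real n) * (if n < h then real (b ! n) else 0)" .
  have "hodge_polygon e a x = (\<Sum>m<n. real (b ! m) / real e) + (x - real n) * (if n < h then real (b ! n) / real e else 0)"
    unfolding hodge_polygon_def Let_def b_def n_def using len by simp
  also have "\<dots> = (1 / real e) * ((\<Sum>m<n. real (b ! m)) + (x - real n) * (if n < h then real (b ! n) else 0))"
    using e1 by (cases "n < h") (simp_all add: sum_divide_distrib[symmetric] field_simps)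
  finally show ?thesis using eq by simp
qed

context vector_space begin

lemma linear_funpow:
  assumes "Vector_Spaces.linear scale scale T"
  shows "Vector_Spaces.linear scale scale (T ^^ n)"
proof (induction n)
  case 0 show ?case unfolding funpow.simps(1) by (rule linear_id)
next
  case (Suc n) then show ?case using Vector_Spaces.linear_compose[OF Suc.IH assms] by (simp only: funpow.simps(2))
qed

lemma shift_sum:
  fixes F :: "nat \<Rightarrow> nat \<Rightarrow> 'b"
  assumes z: "\<And>l m. a \<le> m \<Longrightarrow> F l m = 0"
  shows "(\<Sum>l<a. F l (i + l)) = (\<Sum>m<a. if i \<le> m then F (m - i) m else 0)"
proof -
  have "(\<Sum>l<a. F l (i + l)) = (\<Sum>l<a - i. F l (i + l))"
    by (rule sum.mono_neutral_right) (auto simp: z)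
  also have "\<dots> = (\<Sum>m\<in>{i..<a}. F (m - i) m)"
  proof (cases "i \<le> a")
    case True
    have "(\<Sum>m\<in>{i..<a}. F (m - i) m) = (\<Sum>m\<in>{0 + i..<(a - i) + i}. F (m - i) m)" using True by simp
    also have "\<dots> = (\<Sum>l\<in>{0..<a - i}. F ((l + i) - i) (l + i))" by (rule sum.shift_bounds_nat_ivl)
    finally show ?thesis by (simp add: atLeast0LessThan add.commute)
  next
    case False then show ?thesis by simp
  qed
  also have "\<dots> = (\<Sum>m<a. if i \<le> m then F (m - i) m else 0)"
    by (rule sum.mono_neutral_cong_left) auto
  finally show ?thesis .
qed

lemma kernel_dim:
  fixes T :: "'b \<Rightarrow> 'b" and a :: "nat list" and v :: "nat \<Rightarrow> 'b"
  assumes lin: "Vector_Spaces.linear scale scale T"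
   and ann: "\<forall>j<h. (T ^^ (a ! j)) (v j) = 0"
   and ind: "\<forall>c :: nat \<Rightarrow> nat \<Rightarrow> 'a. (\<Sum>j<h. \<Sum>l<a ! j. scale (c j l) ((T ^^ l) (v j))) = 0 \<longrightarrow> (\<forall>j<h. \<forall>l<a ! j. c j l = 0)"
   and sp: "span {(T ^^ l) (v j) | j l. j < h \<and> l < a ! j} = UNIV"
  shows "dim (kerT T i) = (\<Sum>j<h. min (a ! j) i)"
proof -
  interpret vp: vector_space_pair scale scale by unfold_locales
  define I where "I = Sigma {..<h} (\<lambda>j. {..<a ! j})"
  define f where "f = (\<lambda>p. (T ^^ snd p) (v (fst p)))"
  have finI: "finite I" unfolding I_def by auto
  have LT: "Vector_Spaces.linear scale scale (T ^^ n)" for n using linear_funpow[OF lin] .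
  have sumI: "(\<Sum>j<h. \<Sum>l<a ! j. g j l) = (\<Sum>p\<in>I. g (fst p) (snd p))" for g :: "nat \<Rightarrow> nat \<Rightarrow> 'b"
    unfolding I_def by (subst sum.Sigma) (auto simp: case_prod_beta)
  have indI: "c p = 0" if "(\<Sum>p\<in>I. scale (c p) (f p)) = 0" "p \<in> I" for c p
  proof -
    have "(\<Sum>j<h. \<Sum>l<a ! j. scale (c (j, l)) ((T ^^ l) (v j))) = 0"
      using that(1) by (simp add: sumI f_def)
    then show ?thesis using ind that(2) unfolding I_def by auto
  qed
  have inj: "inj_on f I"
  proof (rule inj_onI)
    fix p q assume pq: "p \<in> I" "q \<in> I" "f p = f q"
    show "p = q"
    proof (rule ccontr)
      assume ne: "p \<noteq> q"
      define c where "c = (\<lambda>r. if r = p then (1::'a) else if r = q then -1 else 0)"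
      have "(\<Sum>r\<in>I. scale (c r) (f r)) = (\<Sum>r\<in>I. (if r = p then f p else 0) - (if r = q then f q else 0))"
        by (rule sum.cong) (auto simp: c_def ne)
      also have "\<dots> = 0" using pq by (simp add: sum_subtractf finI)
      finally have "c p = 0" using indI pq by blast
      then show False by (simp add: c_def)
    qed
  qed
  have indep: "independent (f ` J)" if JI: "J \<subseteq> I" for J
  proof
    assume dep: "dependent (f ` J)"
    have finJ: "finite J" using JI finI finite_subset by blast
    have injJ: "inj_on f J" using inj JI inj_on_subset by blast
    obtain u w where uw: "w \<in> f ` J" "u w \<noteq> 0" "(\<Sum>x\<in>f ` J. scale (u x) x) = 0"
      using dep dependent_finite[of "f ` J"] finJ by auto
    define c where "c = (\<lambda>p. if p \<in> J then u (f p) else 0)"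
    have "(\<Sum>p\<in>I. scale (c p) (f p)) = (\<Sum>p\<in>J. scale (c p) (f p))"
      by (rule sum.mono_neutral_right[OF finI JI]) (auto simp: c_def)
    also have "\<dots> = (\<Sum>p\<in>J. scale (u (f p)) (f p))" by (rule sum.cong) (auto simp: c_def)
    also have "\<dots> = (\<Sum>x\<in>f ` J. scale (u x) x)" by (simp add: sum.reindex[OF injJ])
    finally have s0: "(\<Sum>p\<in>I. scale (c p) (f p)) = 0" using uw by simp
    obtain p where p: "p \<in> J" "w = f p" using uw by auto
    have "p \<in> I" using p JI by auto
    then have "c p = 0" by (rule indI[OF s0])
    then show False using p uw by (simp add: c_def)
  qed
  define J where "J = {p \<in> I. a ! fst p \<le> snd p + i}"
  have JI: "J \<subseteq> I" unfolding J_def by auto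
  have cardJ: "card (f ` J) = (\<Sum>j<h. min (a ! j) i)"
  proof -
    have JS: "J = Sigma {..<h} (\<lambda>j. {a ! j - i..<a ! j})" unfolding J_def I_def by auto
    have "card (f ` J) = card J" using inj JI inj_on_subset card_image by blast
    also have "\<dots> = card (Sigma {..<h} (\<lambda>j. {a ! j - i..<a ! j}))" using JS by simp
    also have "\<dots> = (\<Sum>j<h. card {a ! j - i..<a ! j})" by simp
    also have "\<dots> = (\<Sum>j<h. min (a ! j) i)" by (rule sum.cong) auto
    finally show ?thesis .
  qed
  have sub: "f ` J \<subseteq> kerT T i"
  proof
    fix y assume "y \<in> f ` J"
    then obtain j l where jl: "j < h" "l < a ! j" "a ! j \<le> l + i" "y = (T ^^ l) (v j)"
      unfolding J_def I_def f_def by auto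
    have "(T ^^ i) y = (T ^^ (i + l)) (v j)" using jl by (simp add: funpow_add)
    also have "i + l = (i + l - a ! j) + a ! j" using jl by simp
    also have "(T ^^ ((i + l - a ! j) + a ! j)) (v j) = (T ^^ (i + l - a ! j)) ((T ^^ (a ! j)) (v j))"
      by (simp add: funpow_add)
    also have "\<dots> = 0" using ann jl vp.linear_0[OF LT] by simp
    finally show "y \<in> kerT T i" by (simp add: kerT_def)
  qed
  have sup: "kerT T i \<subseteq> span (f ` J)"
  proof
    fix x assume x: "x \<in> kerT T i"
    have fI: "{(T ^^ l) (v j) | j l. j < h \<and> l < a ! j} = f ` I"
      unfolding I_def f_def by force
    have "x \<in> span (f ` I)" using sp fI by simp
    then obtain u where u: "x = (\<Sum>w\<in>f ` I. scale (u w) w)"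
      using span_finite[of "f ` I"] finI by auto
    define c where "c = (\<lambda>j l. u (f (j, l)))"
    have xc: "x = (\<Sum>j<h. \<Sum>l<a ! j. scale (c j l) ((T ^^ l) (v j)))"
    proof -
      have "x = (\<Sum>p\<in>I. scale (u (f p)) (f p))" using u by (simp add: sum.reindex[OF inj])
      then show ?thesis by (simp add: sumI c_def f_def)
    qed
    define c' where "c' = (\<lambda>j m. if i \<le> m then c j (m - i) else 0)"
    have "0 = (T ^^ i) x" using x by (simp add: kerT_def)
    also have "\<dots> = (\<Sum>j<h. \<Sum>l<a ! j. scale (c j l) ((T ^^ (i + l)) (v j)))"
      unfolding xc by (simp add: vp.linear_sum[OF LT] vp.linear_scale[OF LT] funpow_add)
    also have "\<dots> = (\<Sum>j<h. \<Sum>m<a ! j. scale (c' j m) ((T ^^ m) (v j)))"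
    proof (rule sum.cong[OF refl])
      fix j assume j: "j \<in> {..<h}"
      have z: "scale (c j l) ((T ^^ m) (v j)) = 0" if "a ! j \<le> m" for l m
      proof -
        have "(T ^^ m) (v j) = (T ^^ (m - a ! j)) ((T ^^ (a ! j)) (v j))"
        proof -
          have "m = (m - a ! j) + a ! j" using that by simp
          then have "(T ^^ m) (v j) = (T ^^ ((m - a ! j) + a ! j)) (v j)" by simp
          then show ?thesis by (simp only: funpow_add comp_def)
        qed
        also have "\<dots> = 0" using ann j vp.linear_0[OF LT] by simp
        finally show ?thesis by simp
      qed
      have e1: "(\<Sum>l<a ! j. scale (c j l) ((T ^^ (i + l)) (v j))) = (\<Sum>m<a ! j. if i \<le> m then scale (c j (m - i)) ((T ^^ m) (v j)) else 0)"
        by (rule shift_sum[of "a ! j" "\<lambda>l m. scale (c j l) ((T ^^ m) (v j))" i, OF z])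
      have e2: "(\<Sum>m<a ! j. if i \<le> m then scale (c j (m - i)) ((T ^^ m) (v j)) else 0) = (\<Sum>m<a ! j. scale (c' j m) ((T ^^ m) (v j)))"
        by (rule sum.cong[OF refl]) (simp add: c'_def)
      show "(\<Sum>l<a ! j. scale (c j l) ((T ^^ (i + l)) (v j))) = (\<Sum>m<a ! j. scale (c' j m) ((T ^^ m) (v j)))"
        using e1 e2 by simp
    qed
    finally have s0: "(\<Sum>j<h. \<Sum>m<a ! j. scale (c' j m) ((T ^^ m) (v j))) = 0" by simp
    have c'0: "\<forall>j<h. \<forall>m<a ! j. c' j m = 0" using ind s0 by blast
    have cz: "c j l = 0" if "j < h" "l < a ! j" "\<not> a ! j \<le> l + i" for j l
      using c'0[rule_format, of j "l + i"] that by (simp add: c'_def)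
    have "x = (\<Sum>p\<in>I. scale (c (fst p) (snd p)) (f p))" using xc by (simp add: sumI f_def)
    also have "\<dots> = (\<Sum>p\<in>J. scale (c (fst p) (snd p)) (f p))"
    proof (rule sum.mono_neutral_right[OF finI JI], rule ballI)
      fix p assume "p \<in> I - J"
      then obtain j l where "p = (j, l)" "j < h" "l < a ! j" "\<not> a ! j \<le> l + i"
        by (cases p) (auto simp: I_def J_def)
      then show "scale (c (fst p) (snd p)) (f p) = 0" using cz by simp
    qed
    also have "\<dots> \<in> span (f ` J)"
      by (intro span_sum span_scale span_base) auto
    finally show "x \<in> span (f ` J)" .
  qed
  show ?thesis using dim_unique[OF sub sup indep[OF JI] cardJ] .
qed

end
theorem mainTheorem3:
  fixes scale :: "'k::field \<Rightarrow> 'm::ab_group_add \<Rightarrow> 'm"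
    and T :: "'m \<Rightarrow> 'm"
    and e h :: nat
  assumes vs: "vector_space scale"
    and lin: "Vector_Spaces.linear scale scale T"
    and e_pos: "e \<ge> 1" and h_pos: "h \<ge> 1"
    and nil: "\<forall>x. (T ^^ e) x = 0"
    and findim: "\<exists>B. finite B \<and> module.span scale B = UNIV"
    and gen: "\<exists>g :: nat \<Rightarrow> 'm. module.span scale {(T ^^ j) (g i) | i j. i < h \<and> j < e} = UNIV"
  shows "\<forall>(a :: nat list) (v :: nat \<Rightarrow> 'm).
           is_cyclic_decomposition scale T h a v \<and> (\<forall>i<h. a ! i \<le> e) \<longrightarrow>
           (\<forall>x \<in> {0 .. real h}.
              hodge_polygon e a x = P_poly h (map (delta scale T) [1..<e + 1]) x)"
proof (intro allI impI ballI)
  fix a :: "nat list" and v :: "nat \<Rightarrow> 'm" and x :: real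
  assume H: "is_cyclic_decomposition scale T h a v \<and> (\<forall>i<h. a ! i \<le> e)" and x: "x \<in> {0..real h}"
  interpret vector_space scale by (rule vs)
  have len: "length a = h" and ann: "\<forall>j<h. (T ^^ (a ! j)) (v j) = 0"
    and ind: "\<forall>c :: nat \<Rightarrow> nat \<Rightarrow> 'k. (\<Sum>j<h. \<Sum>l<a ! j. scale (c j l) ((T ^^ l) (v j))) = 0 \<longrightarrow> (\<forall>j<h. \<forall>l<a ! j. c j l = 0)"
    and sp: "span {(T ^^ l) (v j) | j l. j < h \<and> l < a ! j} = UNIV"
    using H unfolding is_cyclic_decomposition_def by auto
  have ae: "\<forall>j<h. a ! j \<le> e" using H by auto
  have dimk: "dim (kerT T i) = (\<Sum>j<h. min (a ! j) i)" for i
    by (rule kernel_dim[OF lin ann ind sp])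
  have del: "delta scale T (i + 1) = (\<Sum>j<h. if i + 1 \<le> a ! j then 1 else (0::real))" for i
  proof -
    have "delta scale T (i + 1) = (\<Sum>j<h. real (min (a ! j) (i + 1)) - real (min (a ! j) i))"
      unfolding delta_def dimk by (simp add: sum_subtractf)
    also have "\<dots> = (\<Sum>j<h. if i + 1 \<le> a ! j then 1 else (0::real))"
      by (rule sum.cong) auto
    finally show ?thesis .
  qed
  have "P_poly h (map (delta scale T) [1..<e + 1]) x = (1 / real e) * (\<Sum>i<e. max 0 (x + delta scale T (i + 1) - real h))"
  proof -
    have nth: "map (delta scale T) [1..<e + 1] ! i = delta scale T (i + 1)" if "i < e" for i
      using that by (simp del: upt_Suc add: add.commute)
    have l: "length (map (delta scale T) [1..<e + 1]) = e" by (simp del: upt_Suc)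
    show ?thesis unfolding P_poly_def l using nth by (simp del: upt_Suc)
  qed
  also have "\<dots> = (1 / real e) * (\<Sum>i<e. max 0 (x + (\<Sum>j<h. if i + 1 \<le> a ! j then 1 else (0::real)) - real h))"
    by (simp only: del)
  also have "\<dots> = hodge_polygon e a x"
    using comb[OF len ae e_pos] x by simp
  finally show "hodge_polygon e a x = P_poly h (map (delta scale T) [1..<e + 1]) x" by simp
qed

end
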